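(* Let $G$ be a connected undirected graph without self-loops on $n$ vertices with degrees $d_i$ and Laplacian $L$, $C=\mathrm{diag}(c_1,\dots,c_n)$ with positive rationals $c_i$ of $O(\log n)$ bits and $c_id_i<1$, $P=I_n-CL$, $\pi=(\mathrm{tr}\,C^{-1})^{-1}C^{-1}\mathbf{1}$, and $\Gamma=\lim_{t\to\infty}\bigl(-\mathbf{1}\pi^Tt+\sum_{s=0}^{t-1}P^s\bigr)$. Then $(I_n-P\,|\,\mathbf{1})$ is invertible and $\Gamma=(I_n-\mathbf{1}\pi^T\,|\,\mathbf{0})\,(I_n-P\,|\,\mathbf{1})^{-1}$.
   Context: For an $n\times n$ matrix $Y$ and $y\in\mathbb{R}^n$, $(Y\,|\,y)$ denotes the matrix obtained from $Y$ by replacing its last column with $y$. $\mathbf{1}$ is the all-ones vector and $\mathbf{0}$ the zero vector. *)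

theory Defs
  imports "HOL-Analysis.Analysis"
begin

definition sym_loopfree :: "('n \<Rightarrow> 'n \<Rightarrow> bool) \<Rightarrow> bool" where
  "sym_loopfree E \<longleftrightarrow> (\<forall>i j. E i j \<longrightarrow> E j i) \<and> (\<forall>i. \<not> E i i)"

definition graph_connected :: "('n \<Rightarrow> 'n \<Rightarrow> bool) \<Rightarrow> bool" where
  "graph_connected E \<longleftrightarrow> (\<forall>i j. E\<^sup>*\<^sup>* i j)"

definition degree :: "('n::finite \<Rightarrow> 'n \<Rightarrow> bool) \<Rightarrow> 'n \<Rightarrow> nat" where
  "degree E i = card {j. E i j}"

definition laplacian :: "('n::finite \<Rightarrow> 'n \<Rightarrow> bool) \<Rightarrow> real^'n^'n" where
  "laplacian E = (\<chi> i j. (if i = j then real (degree E i) else 0) - (if E i j then 1 else 0))"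

definition diag_mat :: "('n::finite \<Rightarrow> real) \<Rightarrow> real^'n^'n" where
  "diag_mat c = (\<chi> i j. if i = j then c i else 0)"

primrec mat_pow :: "real^'n^'n \<Rightarrow> nat \<Rightarrow> real^'n^'n" where
  "mat_pow A 0 = mat 1"
| "mat_pow A (Suc k) = mat_pow A k ** A"

definition last_idx :: "'n::{finite,linorder}" where
  "last_idx = Max UNIV"

text \<open>(Y | y): replace the last column of Y by y.\<close>
definition repl_last_col :: "((real, 'n::{finite,linorder}) vec, 'n) vec \<Rightarrow> (real, 'n) vec \<Rightarrow> ((real, 'n) vec, 'n) vec" where
  "repl_last_col Y y = (\<chi> i j. if j = last_idx then y $ i else Y $ i $ j)"

definition outer :: "real^'n \<Rightarrow> real^'n \<Rightarrow> real^'n^'n" where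
  "outer u v = (\<chi> i j. u $ i * v $ j)"

end

theory Submission
  imports Defs
begin

lemma mm_radd: "((A::real^'n^'m) + B) ** C = A ** C + B ** C"
  by (simp add: matrix_matrix_mult_def vec_eq_iff sum.distrib distrib_right)
lemma mm_rdiff: "((A::real^'n^'m) - B) ** C = A ** C - B ** C"
  by (simp add: matrix_matrix_mult_def vec_eq_iff sum_subtractf left_diff_distrib)
lemma mm_ldiff: "(A::real^'n^'m) ** (B - C) = A ** B - A ** C"
  by (simp add: matrix_matrix_mult_def vec_eq_iff sum_subtractf right_diff_distrib)
lemma mm_rneg: "(- (A::real^'n^'m)) ** C = - (A ** C)"
  by (simp add: matrix_matrix_mult_def vec_eq_iff sum_negf)
lemma mm_rsum: "(\<Sum>s\<in>S. f s) ** (C::real^'p^'n) = (\<Sum>s\<in>S. (f s :: real^'n^'m) ** C)"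
proof (induction S rule: infinite_finite_induct)
  case (insert x F) then show ?case by (simp add: mm_radd)
qed auto
lemma mv_rsum: "(\<Sum>s\<in>S. f s) *v (x::real^'n) = (\<Sum>s\<in>S. (f s :: real^'n^'m) *v x)"
proof (induction S rule: infinite_finite_induct)
  case (insert y F) then show ?case by (simp add: matrix_vector_mult_add_rdistrib)
qed auto

lemma mat_pow_comm: "mat_pow A k ** A = A ** mat_pow A k"
proof (induction k)
  case (Suc k)
  have "mat_pow A (Suc k) ** A = (A ** mat_pow A k) ** A" using Suc.IH by simp
  also have "\<dots> = A ** mat_pow A (Suc k)" by (simp add: matrix_mul_assoc)
  finally show ?case .
qed simp

lemma mat_pow_Suc': "mat_pow A (Suc k) *v x = A *v (mat_pow A k *v x)"
  by (simp add: mat_pow_comm matrix_vector_mul_assoc)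

lemma repl_mult:
  fixes A :: "real^('n::{finite,linorder})^('n::{finite,linorder})"
  shows "A ** repl_last_col Y y = repl_last_col (A ** Y) (A *v y)"
  by (simp add: repl_last_col_def matrix_matrix_mult_def matrix_vector_mult_def vec_eq_iff)

lemma repl_mv: "(repl_last_col Y y *v x) $ i
   = (Y *v (\<chi> j. if j = last_idx then 0 else x $ j)) $ i + y $ i * x $ last_idx"
proof -
  have "\<And>j. (if j = last_idx then y $ i else Y $ i $ j) * x $ j
     = Y $ i $ j * (if j = last_idx then 0 else x $ j) + (if j = last_idx then y $ i * x $ last_idx else 0)"
    by auto
  then show ?thesis
    by (simp add: repl_last_col_def matrix_vector_mult_def sum.distrib)
qed

lemma diag_mv: "(diag_mat c *v z) $ i = c i * z $ i"
proof -
  have "\<And>j. diag_mat c $ i $ j * z $ j = (if i = j then c i * z $ j else 0)"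
    by (simp add: diag_mat_def)
  then show ?thesis by (simp add: matrix_vector_mult_def)
qed

lemma mv_neg: "(- (A::real^'n^'m)) *v x = - (A *v x)"
  by (simp add: matrix_vector_mult_def vec_eq_iff sum_negf)
lemma mv_scale: "((k::real) *\<^sub>R (A::real^'n^'m)) *v x = k *\<^sub>R (A *v x)"
  by (simp add: matrix_vector_mult_def vec_eq_iff sum_distrib_left mult_ac)

lemma lim_repl:
  fixes A :: "nat \<Rightarrow> real^('n::{finite,linorder})^('n::{finite,linorder})"
  assumes "A \<longlonglongrightarrow> B"
  shows "(\<lambda>t. repl_last_col (mat 1 - A t) 0 ** C) \<longlonglongrightarrow> repl_last_col (mat 1 - B) 0 ** C"
proof (intro vec_tendstoI)
  fix i j
  have ent: "(\<lambda>t. mat 1 $ i $ k - A t $ i $ k) \<longlonglongrightarrow> mat 1 $ i $ k - B $ i $ k" for k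
    by (intro tendsto_vec_nth tendsto_diff tendsto_const assms)
  have k: "(\<lambda>t. (if k = last_idx then (0::real^('n::{finite,linorder})) $ i else (mat 1 - A t) $ i $ k) * C $ k $ j)
      \<longlonglongrightarrow> (if k = last_idx then (0::real^('n::{finite,linorder})) $ i else (mat 1 - B) $ i $ k) * C $ k $ j" for k
    by (cases "k = last_idx") (auto intro!: tendsto_mult_right ent)
  show "(\<lambda>t. (repl_last_col (mat 1 - A t) 0 ** C) $ i $ j)
      \<longlonglongrightarrow> (repl_last_col (mat 1 - B) 0 ** C) $ i $ j"
    unfolding matrix_matrix_mult_def repl_last_col_def vec_lambda_beta
    by (rule tendsto_sum) (rule k)
qed

locale lap =
  fixes E :: "'n::{finite,linorder} \<Rightarrow> 'n \<Rightarrow> bool" and c :: "'n \<Rightarrow> real"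
    and P :: "real^('n::{finite,linorder})^('n::{finite,linorder})" and \<pi> :: "real^('n::{finite,linorder})"
  assumes sym: "\<And>i j. E i j \<Longrightarrow> E j i" and noloop: "\<And>i. \<not> E i i"
  and conn: "\<And>i j. E\<^sup>*\<^sup>* i j" and cpos: "\<And>i. c i > 0"
  and cd: "\<And>i. c i * real (degree E i) < 1"
  and P_def: "P = mat 1 - diag_mat c ** laplacian E"
  and pi_def: "\<pi> = (\<chi> i. inverse (\<Sum>j\<in>UNIV. inverse (c j)) * inverse (c i))"
begin

definition W where "W = (\<Sum>j\<in>UNIV. inverse (c j))"

lemma W_pos: "W > 0"
  unfolding W_def by (rule sum_pos) (auto simp: cpos)

lemma swap: "(\<Sum>i\<in>UNIV. \<Sum>j\<in>{j. E i j}. f i j) = (\<Sum>i\<in>UNIV. \<Sum>j\<in>{j. E i j}. f j i)"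
proof -
  have "(\<Sum>i\<in>UNIV. \<Sum>j\<in>{j. E i j}. f i j) = (\<Sum>i\<in>UNIV. \<Sum>j\<in>UNIV. if E i j then f i j else 0)"
    by (simp add: sum.If_cases)
  also have "\<dots> = (\<Sum>j\<in>UNIV. \<Sum>i\<in>UNIV. if E i j then f i j else 0)"
    by (rule sum.swap)
  also have "\<dots> = (\<Sum>j\<in>UNIV. \<Sum>i\<in>UNIV. if E j i then f i j else 0)"
    by (intro sum.cong refl) (auto dest: sym)
  also have "\<dots> = (\<Sum>i\<in>UNIV. \<Sum>j\<in>{j. E i j}. f j i)"
    by (simp add: sum.If_cases)
  finally show ?thesis .
qed

lemma lap_apply: "(laplacian E *v y) $ i = (\<Sum>j\<in>{j. E i j}. y $ i - y $ j)"
proof -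
  have e: "\<And>j. laplacian E $ i $ j * y $ j = (if i = j then real (degree E i) * y $ j else 0)
      - (if E i j then y $ j else 0)"
    by (simp add: laplacian_def left_diff_distrib)
  have "(laplacian E *v y) $ i = (\<Sum>j\<in>UNIV. (if i = j then real (degree E i) * y $ j else 0)
      - (if E i j then y $ j else 0))"
    by (simp add: matrix_vector_mult_def e)
  also have "\<dots> = real (degree E i) * y $ i - (\<Sum>j\<in>{j. E i j}. y $ j)"
    by (simp add: sum_subtractf sum.If_cases)
  also have "\<dots> = (\<Sum>j\<in>{j. E i j}. y $ i - y $ j)"
    by (simp add: sum_subtractf degree_def)
  finally show ?thesis .
qed

lemma P_apply: "(P *v y) $ i = y $ i - c i * (\<Sum>j\<in>{j. E i j}. y $ i - y $ j)"
proof -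
  have "P *v y = y - diag_mat c *v (laplacian E *v y)"
    by (simp add: P_def matrix_vector_mult_diff_rdistrib matrix_vector_mul_assoc)
  then show ?thesis
    by (simp add: diag_mv lap_apply)
qed

definition N where "N y = (\<Sum>i\<in>UNIV. (y $ i)^2 / c i)"
definition g where "g y i = (\<Sum>j\<in>{j. E i j}. y $ i - y $ j :: real)"
definition sq where "sq y i = (\<Sum>j\<in>{j. E i j}. (y $ i - y $ j)^2 :: real)"

lemma P_apply': "(P *v y) $ i = y $ i - c i * g y i"
  by (simp add: P_apply g_def)

lemma sum_g: "(\<Sum>i\<in>UNIV. g y i) = 0"
proof -
  have "(\<Sum>i\<in>UNIV. g y i) = (\<Sum>i\<in>UNIV. \<Sum>j\<in>{j. E i j}. y $ j - y $ i)"
    unfolding g_def by (rule swap)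
  also have "\<dots> = - (\<Sum>i\<in>UNIV. g y i)"
    unfolding g_def by (simp add: sum_negf[symmetric])
  finally show ?thesis by simp
qed

lemma two_sum: "2 * (\<Sum>i\<in>UNIV. y $ i * g y i) = (\<Sum>i\<in>UNIV. sq y i)"
proof -
  have a: "(\<Sum>i\<in>UNIV. y $ i * g y i) = (\<Sum>i\<in>UNIV. \<Sum>j\<in>{j. E i j}. y $ i * (y $ i - y $ j))"
    unfolding g_def by (simp add: sum_distrib_left)
  also have "\<dots> = (\<Sum>i\<in>UNIV. \<Sum>j\<in>{j. E i j}. y $ j * (y $ j - y $ i))"
    by (rule swap)
  finally have b: "(\<Sum>i\<in>UNIV. y $ i * g y i) = (\<Sum>i\<in>UNIV. \<Sum>j\<in>{j. E i j}. y $ j * (y $ j - y $ i))" .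
  have "2 * (\<Sum>i\<in>UNIV. y $ i * g y i) = (\<Sum>i\<in>UNIV. \<Sum>j\<in>{j. E i j}. y $ i * (y $ i - y $ j) + y $ j * (y $ j - y $ i))"
    using a b by (simp add: sum.distrib)
  also have "\<dots> = (\<Sum>i\<in>UNIV. sq y i)"
    unfolding sq_def by (intro sum.cong refl) (simp add: power2_eq_square algebra_simps)
  finally show ?thesis .
qed

lemma sq_nonneg: "sq y i \<ge> 0"
  unfolding sq_def by (rule sum_nonneg) simp

lemma g_sq: "(g y i)^2 \<le> real (degree E i) * sq y i"
  unfolding g_def sq_def degree_def
  using sum_squared_le_sum_of_squares[of "\<lambda>j. y $ i - y $ j" "{j. E i j}"] by (simp add: mult.commute)

lemma key: "N (P *v y) + (\<Sum>i\<in>UNIV. (1 - c i * real (degree E i)) * sq y i) \<le> N y"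
proof -
  have t: "((P *v y) $ i)^2 / c i = (y $ i)^2 / c i - 2 * (y $ i * g y i) + c i * (g y i)^2" for i
    using cpos[of i] by (simp add: P_apply' power2_eq_square field_simps)
  have "N (P *v y) = N y - 2 * (\<Sum>i\<in>UNIV. y $ i * g y i) + (\<Sum>i\<in>UNIV. c i * (g y i)^2)"
    unfolding N_def t by (simp add: sum.distrib sum_subtractf sum_distrib_left)
  also have "\<dots> = N y - (\<Sum>i\<in>UNIV. sq y i) + (\<Sum>i\<in>UNIV. c i * (g y i)^2)"
    by (simp add: two_sum)
  also have "\<dots> \<le> N y - (\<Sum>i\<in>UNIV. sq y i) + (\<Sum>i\<in>UNIV. c i * real (degree E i) * sq y i)"
    using g_sq cpos by (intro add_left_mono sum_mono) (simp add: mult.assoc less_imp_le mult_left_mono)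
  finally show ?thesis by (simp add: sum_subtractf left_diff_distrib)
qed

lemma key_edge: assumes "E i j"
  shows "(1 - c i * real (degree E i)) * (y $ i - y $ j)^2 \<le> N y - N (P *v y)"
proof -
  have "(y $ i - y $ j)^2 \<le> sq y i"
    unfolding sq_def using assms by (intro member_le_sum) auto
  then have "(1 - c i * real (degree E i)) * (y $ i - y $ j)^2 \<le> (1 - c i * real (degree E i)) * sq y i"
    using cd[of i] by (intro mult_left_mono) auto
  also have "\<dots> \<le> (\<Sum>i\<in>UNIV. (1 - c i * real (degree E i)) * sq y i)"
    using cd sq_nonneg by (intro member_le_sum) (auto intro!: mult_nonneg_nonneg simp: less_imp_le)
  finally show ?thesis using key[of y] by simp
qed

lemma N_mono: "N (P *v y) \<le> N y"
proof -
  have "0 \<le> (\<Sum>i\<in>UNIV. (1 - c i * real (degree E i)) * sq y i)"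
    using cd sq_nonneg by (intro sum_nonneg) (auto intro!: mult_nonneg_nonneg simp: less_imp_le)
  then show ?thesis using key[of y] by simp
qed

lemma N_nonneg: "N y \<ge> 0"
  unfolding N_def using cpos by (intro sum_nonneg) (simp add: less_imp_le)

lemma inv_P: "(\<Sum>i\<in>UNIV. (P *v y) $ i / c i) = (\<Sum>i\<in>UNIV. y $ i / c i)"
proof -
  have "(P *v y) $ i / c i = y $ i / c i - g y i" for i
    using cpos[of i] by (simp add: P_apply' field_simps)
  then show ?thesis by (simp add: sum_subtractf sum_g)
qed

definition ys where "ys x t = mat_pow P t *v x"

lemma ys_Suc: "ys x (Suc t) = P *v ys x t"
  unfolding ys_def by (rule mat_pow_Suc')

lemma conv_edge: assumes "E i j"
  shows "(\<lambda>t. ys x t $ i - ys x t $ j) \<longlonglongrightarrow> 0"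
proof -
  define a where "a t = N (ys x t)" for t
  have "decseq a" unfolding a_def
    by (rule decseq_SucI) (simp add: ys_Suc N_mono)
  moreover have "\<forall>t. 0 \<le> a t" by (simp add: a_def N_nonneg)
  ultimately obtain L where L: "a \<longlonglongrightarrow> L" by (rule decseq_convergent)
  have "(\<lambda>t. a t - a (Suc t)) \<longlonglongrightarrow> L - L"
    by (intro tendsto_diff L LIMSEQ_Suc)
  then have "(\<lambda>t. (a t - a (Suc t)) / (1 - c i * real (degree E i))) \<longlonglongrightarrow> 0"
    using tendsto_divide_zero by fastforce
  moreover have "(ys x t $ i - ys x t $ j)^2 \<le> (a t - a (Suc t)) / (1 - c i * real (degree E i))" for t
    using key_edge[OF assms, of "ys x t"] cd[of i]
    by (simp add: a_def ys_Suc pos_le_divide_eq mult.commute)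
  ultimately have "(\<lambda>t. (ys x t $ i - ys x t $ j)^2) \<longlonglongrightarrow> 0"
  proof -
    assume h: "(\<lambda>t. (a t - a (Suc t)) / (1 - c i * real (degree E i))) \<longlonglongrightarrow> 0"
      and b: "\<And>t. (ys x t $ i - ys x t $ j)^2 \<le> (a t - a (Suc t)) / (1 - c i * real (degree E i))"
    have lo: "\<forall>\<^sub>F t in sequentially. (0::real) \<le> (ys x t $ i - ys x t $ j)^2"
      by (intro always_eventually allI zero_le_power2)
    have hi: "\<forall>\<^sub>F t in sequentially. (ys x t $ i - ys x t $ j)^2 \<le> (a t - a (Suc t)) / (1 - c i * real (degree E i))"
      by (intro always_eventually allI b)
    show ?thesis by (rule tendsto_sandwich[OF lo hi tendsto_const h])
  qed
  then have "(\<lambda>t. sqrt ((ys x t $ i - ys x t $ j)^2)) \<longlonglongrightarrow> sqrt 0"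
    by (rule tendsto_real_sqrt)
  then have "(\<lambda>t. \<bar>ys x t $ i - ys x t $ j\<bar>) \<longlonglongrightarrow> 0" by simp
  then show ?thesis by (simp add: tendsto_rabs_zero_iff)
qed

lemma conv_all: "(\<lambda>t. ys x t $ i - ys x t $ j) \<longlonglongrightarrow> 0"
  using conn[of i j]
proof (induction rule: rtranclp_induct)
  case base then show ?case by simp
next
  case (step y z)
  have "(\<lambda>t. (ys x t $ i - ys x t $ y) + (ys x t $ y - ys x t $ z)) \<longlonglongrightarrow> 0 + 0"
    by (intro tendsto_add step.IH conv_edge step.hyps)
  then show ?case by simp
qed

lemma inv_ys: "(\<Sum>i\<in>UNIV. ys x t $ i / c i) = (\<Sum>i\<in>UNIV. x $ i / c i)"
  by (induction t) (simp_all add: ys_Suc inv_P, simp add: ys_def)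

lemma pi_sum: "(\<Sum>j\<in>UNIV. \<pi> $ j) = 1"
  using W_pos by (simp add: pi_def sum_distrib_left[symmetric] W_def)

lemma pi_dot: "(\<Sum>j\<in>UNIV. \<pi> $ j * y $ j) = inverse W * (\<Sum>j\<in>UNIV. y $ j / c j)"
proof -
  have "\<pi> $ j * y $ j = inverse W * (y $ j / c j)" for j
    by (simp add: pi_def W_def divide_inverse mult_ac)
  then show ?thesis by (simp add: sum_distrib_left)
qed

lemma conv_vec: "(\<lambda>t. ys x t $ i) \<longlonglongrightarrow> (\<Sum>j\<in>UNIV. \<pi> $ j * x $ j)"
proof -
  let ?m = "\<Sum>j\<in>UNIV. \<pi> $ j * x $ j"
  have eq: "ys x t $ i - ?m = (\<Sum>j\<in>UNIV. \<pi> $ j * (ys x t $ i - ys x t $ j))" for t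
  proof -
    have "(\<Sum>j\<in>UNIV. \<pi> $ j * (ys x t $ i - ys x t $ j))
        = (\<Sum>j\<in>UNIV. \<pi> $ j) * ys x t $ i - (\<Sum>j\<in>UNIV. \<pi> $ j * ys x t $ j)"
      by (simp add: sum_subtractf right_diff_distrib sum_distrib_right)
    also have "\<dots> = ys x t $ i - ?m"
      by (simp add: pi_sum pi_dot inv_ys)
    finally show ?thesis by simp
  qed
  have "(\<lambda>t. \<Sum>j\<in>UNIV. \<pi> $ j * (ys x t $ i - ys x t $ j)) \<longlonglongrightarrow> (\<Sum>j\<in>UNIV. \<pi> $ j * 0)"
    by (intro tendsto_sum tendsto_mult tendsto_const conv_all)
  then have "(\<lambda>t. ys x t $ i - ?m) \<longlonglongrightarrow> 0" by (simp add: eq)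
  then have "(\<lambda>t. (ys x t $ i - ?m) + ?m) \<longlonglongrightarrow> 0 + ?m" by (intro tendsto_add tendsto_const)
  then show ?thesis by simp
qed

lemma conv_mat: "mat_pow P \<longlonglongrightarrow> outer (vec 1) \<pi>"
proof (intro vec_tendstoI)
  fix i j
  have e: "mat_pow P t $ i $ j = ys (axis j 1) t $ i" for t
    by (simp add: ys_def matrix_vector_mult_def axis_def if_distrib cong: if_cong)
  have "(\<Sum>k\<in>UNIV. \<pi> $ k * axis j 1 $ k) = \<pi> $ j"
    by (simp add: axis_def if_distrib cong: if_cong)
  then show "(\<lambda>t. mat_pow P t $ i $ j) \<longlonglongrightarrow> outer (vec 1) \<pi> $ i $ j"
    using conv_vec[of "axis j 1" i] by (simp add: e outer_def)
qed

lemma harm: assumes "\<And>i j. E i j \<Longrightarrow> z $ i = (z $ j :: real)" shows "z $ i = z $ j"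
  using conn[of i j]
proof (induction rule: rtranclp_induct)
  case (step y w) then show ?case using assms[of y w] by simp
qed simp

lemma M_inj: assumes "repl_last_col (mat 1 - P) (vec 1) *v x = 0" shows "x = 0"
proof -
  define x' where "x' = (\<chi> j. if j = last_idx then 0 else x $ j)"
  have e: "x' $ i - (P *v x') $ i + x $ last_idx = 0" for i
    using arg_cong[OF assms, of "\<lambda>v. v $ i"]
    by (simp add: repl_mv x'_def matrix_vector_mult_diff_rdistrib)
  have "(\<Sum>i\<in>UNIV. (x' $ i - (P *v x') $ i + x $ last_idx) / c i) = 0"
    by (simp add: e)
  moreover have "(\<Sum>i\<in>UNIV. (x' $ i - (P *v x') $ i + x $ last_idx) / c i)
     = (\<Sum>i\<in>UNIV. x' $ i / c i) - (\<Sum>i\<in>UNIV. (P *v x') $ i / c i) + (\<Sum>i\<in>UNIV. x $ last_idx / c i)"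
    by (simp add: add_divide_distrib diff_divide_distrib sum.distrib sum_subtractf)
  moreover have "(\<Sum>i\<in>UNIV. x $ last_idx / c i) = x $ last_idx * W"
    by (simp add: W_def sum_distrib_left divide_inverse)
  ultimately have "x $ last_idx * W = 0" by (simp add: inv_P)
  then have xl: "x $ last_idx = 0" using W_pos by simp
  then have Px: "P *v x' = x'" using e by (simp add: vec_eq_iff)
  have "x' $ i = x' $ j" if "E i j" for i j
  proof -
    have "(1 - c i * real (degree E i)) * (x' $ i - x' $ j)^2 \<le> 0"
      using key_edge[OF that, of x'] by (simp add: Px)
    moreover have "0 < 1 - c i * real (degree E i)" using cd[of i] by simp
    ultimately have "(x' $ i - x' $ j)^2 \<le> 0"
      by (simp add: mult_le_0_iff)
    then show ?thesis by simp
  qed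
  then have "x' $ i = x' $ last_idx" for i by (rule harm)
  then have "x' $ i = 0" for i by (simp add: x'_def)
  then show ?thesis using xl by (simp add: vec_eq_iff x'_def) (metis)
qed

lemma M_inv: "invertible (repl_last_col (mat 1 - P) (vec 1))"
  unfolding invertible_left_inverse matrix_left_invertible_ker using M_inj by blast

lemma P_one: "P *v 1 = 1"
  by (simp add: vec_eq_iff P_apply' g_def)

lemma pow_one: "mat_pow P s *v 1 = 1"
proof (induction s)
  case (Suc s)
  have "mat_pow P (Suc s) *v 1 = P *v (mat_pow P s *v 1)" by (rule mat_pow_Suc')
  then show ?case using Suc P_one by simp
qed simp

lemma Pi_one: "outer 1 \<pi> *v 1 = 1"
  by (simp add: vec_eq_iff outer_def matrix_vector_mult_def pi_sum)

lemma Pi_P: "outer 1 \<pi> ** P = outer 1 \<pi>"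
proof -
  have "(\<Sum>k\<in>UNIV. \<pi> $ k * P $ k $ j) = \<pi> $ j" for j
  proof -
    have a: "P $ k $ j = (P *v axis j 1) $ k" for k
      by (simp add: matrix_vector_mult_def axis_def if_distrib cong: if_cong)
    have b: "(\<Sum>k\<in>UNIV. \<pi> $ k * axis j 1 $ k) = \<pi> $ j"
      by (simp add: axis_def if_distrib cong: if_cong)
    show ?thesis using b by (simp add: a pi_dot inv_P)
  qed
  note m = this
  show ?thesis
  proof (subst vec_eq_iff, intro allI, subst vec_eq_iff, intro allI)
    fix i j show "(outer 1 \<pi> ** P) $ i $ j = outer 1 \<pi> $ i $ j"
      using m by (simp add: outer_def matrix_matrix_mult_def)
  qed
qed

definition S where "S t = - (of_nat t *\<^sub>R outer (vec 1) \<pi>) + (\<Sum>s<t. mat_pow P s)"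

lemma S_one: "S t *v 1 = 0"
  by (simp add: S_def matrix_vector_mult_diff_rdistrib matrix_vector_mult_add_rdistrib mv_neg mv_scale mv_rsum pow_one Pi_one vec_eq_iff of_nat_index)

lemma S_IP: "S t ** (mat 1 - P) = mat 1 - mat_pow P t"
proof -
  have "outer (vec 1) \<pi> ** (mat 1 - P) = 0" by (simp add: mm_ldiff Pi_P)
  then have "S t ** (mat 1 - P) = (\<Sum>s<t. mat_pow P s ** (mat 1 - P))"
    by (simp add: S_def mm_radd mm_rdiff mm_rneg mm_rsum flip: scalar_matrix_assoc)
  also have "\<dots> = (\<Sum>s<t. mat_pow P s - mat_pow P (Suc s))"
    by (simp only: mm_ldiff matrix_mul_rid mat_pow.simps)
  also have "\<dots> = mat_pow P 0 - mat_pow P t"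
    by (rule sum_lessThan_telescope')
  also have "\<dots> = mat 1 - mat_pow P t" by simp
  finally show ?thesis .
qed

lemma main: "invertible (repl_last_col (mat 1 - P) (vec 1))
    \<and> ((\<lambda>t. - (of_nat t *\<^sub>R outer (vec 1) \<pi>) + (\<Sum>s<t. mat_pow P s))
        \<longlonglongrightarrow> repl_last_col (mat 1 - outer (vec 1) \<pi>) 0
              ** matrix_inv (repl_last_col (mat 1 - P) (vec 1)))"
proof -
  let ?M = "repl_last_col (mat 1 - P) (vec 1)"
  have inv: "?M ** matrix_inv ?M = mat 1 \<and> matrix_inv ?M ** ?M = mat 1"
    using M_inv unfolding invertible_def matrix_inv_def by (rule someI_ex)
  have "S t = repl_last_col (mat 1 - mat_pow P t) 0 ** matrix_inv ?M" for t
  proof -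
    have "S t = S t ** (?M ** matrix_inv ?M)" using inv by simp
    also have "\<dots> = (S t ** ?M) ** matrix_inv ?M" by (simp add: matrix_mul_assoc)
    also have "S t ** ?M = repl_last_col (mat 1 - mat_pow P t) 0"
      by (simp add: repl_mult S_IP S_one)
    finally show ?thesis .
  qed
  then have "(\<lambda>t. S t) \<longlonglongrightarrow> repl_last_col (mat 1 - outer (vec 1) \<pi>) 0 ** matrix_inv ?M"
    using lim_repl[OF conv_mat] by simp
  then show ?thesis using M_inv by (simp add: S_def)
qed

end

theorem lemma3p10:
  fixes E :: "'n::{finite,linorder} \<Rightarrow> 'n \<Rightarrow> bool"
    and c :: "'n \<Rightarrow> real"
  assumes "sym_loopfree E"
    and "graph_connected E"
    and "\<forall>i. c i \<in> \<rat> \<and> c i > 0"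
    and "\<forall>i. c i * real (degree E i) < 1"
  defines "P \<equiv> mat 1 - diag_mat c ** laplacian E"
    and "\<pi> \<equiv> (\<chi> i. inverse (\<Sum>j\<in>UNIV. inverse (c j)) * inverse (c i)) :: (real, 'n) vec"
  shows "invertible (repl_last_col (mat 1 - P) (vec 1))
    \<and> ((\<lambda>t. - (of_nat t *\<^sub>R outer (vec 1) \<pi>) + (\<Sum>s<t. mat_pow P s))
        \<longlonglongrightarrow> repl_last_col (mat 1 - outer (vec 1) \<pi>) 0
              ** matrix_inv (repl_last_col (mat 1 - P) (vec 1)))"
proof -
  interpret lap E c P \<pi>
    using assms unfolding sym_loopfree_def graph_connected_def
    by unfold_locales auto
  show ?thesis by (rule main)
qed

end
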